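(* There exists a universal constant $c>0$ such that the following holds. Let $k$ and $n$ be positive integers with $k>n$. For every $\mathbf{y}=y_1\ldots y_k\in\{0,1\}^k$, let $\rho(\mathbf{y})$ be an $n$-qubit density matrix. Suppose there exist Hermitian operators $O_1,\ldots,O_k$ on $n$ qubits, real numbers $\alpha_1,\ldots,\alpha_k$ and $\gamma>0$ such that for all $\mathbf{y}\in\{0,1\}^k$ and all $i\in\{1,\ldots,k\}$: (i) if $y_i=0$ then $\operatorname{Tr}[\rho(\mathbf{y})O_i]\le \alpha_i-\gamma$, and (ii) if $y_i=1$ then $\operatorname{Tr}[\rho(\mathbf{y})O_i]\ge \alpha_i+\gamma$. Let $\|O\|_\infty:=\max_i\|O_i\|_\infty$. Then $n\,\|O\|_\infty^2/\gamma^2\ \ge\ c\,k$, i.e. $n\|O\|_\infty^2/\gamma^2\in\Omega(k)$.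
   Context: $\|A\|_\infty$ denotes the spectral norm (largest absolute eigenvalue) of a Hermitian operator $A$. An $n$-qubit density matrix is a positive semidefinite, unit-trace operator on $(\mathbb{C}^2)^{\otimes n}$. *)

theory Defs
  imports "Jordan_Normal_Form.Matrix" "Jordan_Normal_Form.Char_Poly"
begin

definition hermitian_mat :: "nat \<Rightarrow> complex mat \<Rightarrow> bool" where
  "hermitian_mat d A \<longleftrightarrow> A \<in> carrier_mat d d \<and>
     (\<forall>i<d. \<forall>j<d. A $$ (i, j) = cnj (A $$ (j, i)))"

definition psd_mat :: "nat \<Rightarrow> complex mat \<Rightarrow> bool" where
  "psd_mat d A \<longleftrightarrow> hermitian_mat d A \<and>
     (\<forall>v \<in> carrier_vec d. Re (conjugate v \<bullet> (A *\<^sub>v v)) \<ge> 0)"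

definition mat_trace :: "complex mat \<Rightarrow> complex" where
  "mat_trace A = (\<Sum>i<dim_row A. A $$ (i, i))"

definition density_mat :: "nat \<Rightarrow> complex mat \<Rightarrow> bool" where
  "density_mat n \<rho> \<longleftrightarrow> psd_mat (2 ^ n) \<rho> \<and> mat_trace \<rho> = 1"

definition spec_norm :: "complex mat \<Rightarrow> real" where
  "spec_norm A = Max {cmod e | e. eigenvalue A e}"

end

theory Submission
  imports Defs "Jordan_Normal_Form.Spectral_Radius"
begin


lemma mult_entry:
  assumes "A \<in> carrier_mat d d" "B \<in> carrier_mat d d" "i < d" "j < d"
  shows "(A * B) $$ (i,j) = (\<Sum>l<d. A $$ (i,l) * B $$ (l,j))"
  using assms by (auto simp: index_mult_mat scalar_prod_def atLeast0LessThan intro!: sum.cong)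

lemma trace_mult:
  assumes "A \<in> carrier_mat d d" "B \<in> carrier_mat d d"
  shows "mat_trace (A * B) = (\<Sum>i<d. \<Sum>l<d. A $$ (i,l) * B $$ (l,i))"
proof -
  have "dim_row (A * B) = d" using assms by simp
  have "mat_trace (A * B) = (\<Sum>i<d. (A * B) $$ (i,i))" unfolding mat_trace_def using \<open>dim_row (A * B) = d\<close> by simp
  also have "\<dots> = (\<Sum>i<d. \<Sum>l<d. A $$ (i,l) * B $$ (l,i))"
    by (intro sum.cong refl) (simp add: mult_entry[OF assms])
  finally show ?thesis .
qed

lemma cs_real:
  fixes f g :: "'a \<Rightarrow> real"
  shows "(\<Sum>i\<in>I. f i * g i)^2 \<le> (\<Sum>i\<in>I. (f i)^2) * (\<Sum>i\<in>I. (g i)^2)"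
proof -
  have a: "(\<Sum>i\<in>I. \<Sum>j\<in>I. (f i)^2 * (g j)^2) = (\<Sum>i\<in>I. (f i)^2) * (\<Sum>i\<in>I. (g i)^2)"
    by (simp add: sum_product)
  have b: "(\<Sum>i\<in>I. \<Sum>j\<in>I. (f j)^2 * (g i)^2) = (\<Sum>i\<in>I. (f i)^2) * (\<Sum>i\<in>I. (g i)^2)"
    by (subst sum.swap) (simp add: sum_product)
  have c: "(\<Sum>i\<in>I. \<Sum>j\<in>I. (f i * g i) * (f j * g j)) = (\<Sum>i\<in>I. f i * g i)^2"
    by (simp add: sum_product power2_eq_square)
  have "0 \<le> (\<Sum>i\<in>I. \<Sum>j\<in>I. (f i * g j - f j * g i)^2)"
    by (intro sum_nonneg) auto
  also have "\<dots> = (\<Sum>i\<in>I. \<Sum>j\<in>I. (f i)^2 * (g j)^2 + (f j)^2 * (g i)^2 - 2 * ((f i * g i) * (f j * g j)))"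
    by (intro sum.cong refl) (simp add: power2_eq_square algebra_simps)
  also have "\<dots> = 2 * ((\<Sum>i\<in>I. (f i)^2) * (\<Sum>i\<in>I. (g i)^2)) - 2 * (\<Sum>i\<in>I. f i * g i)^2"
    by (simp only: sum.distrib sum_subtractf a b c sum_distrib_left[symmetric])
       (simp add: sum_distrib_right[symmetric] power2_eq_square)
  finally show ?thesis by simp
qed

lemma rs_lemma:
  fixes u a b :: "'a \<Rightarrow> real"
  assumes "\<And>i. i \<in> I \<Longrightarrow> 0 \<le> a i" "\<And>i. i \<in> I \<Longrightarrow> 0 \<le> b i" "\<And>i. i \<in> I \<Longrightarrow> 0 \<le> u i"
    "\<And>i. i \<in> I \<Longrightarrow> (u i)^2 \<le> a i * b i"
  shows "(\<Sum>i\<in>I. u i)^2 \<le> (\<Sum>i\<in>I. a i) * (\<Sum>i\<in>I. b i)"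
proof -
  have le: "u i \<le> sqrt (a i) * sqrt (b i)" if "i \<in> I" for i
    using assms[OF that] by (metis real_le_rsqrt real_sqrt_mult)
  have "0 \<le> (\<Sum>i\<in>I. u i)" using assms by (simp add: sum_nonneg)
  moreover have "(\<Sum>i\<in>I. u i) \<le> (\<Sum>i\<in>I. sqrt (a i) * sqrt (b i))" using le by (rule sum_mono)
  ultimately have "(\<Sum>i\<in>I. u i)^2 \<le> (\<Sum>i\<in>I. sqrt (a i) * sqrt (b i))^2"
    by (simp add: power_mono)
  also have "\<dots> \<le> (\<Sum>i\<in>I. (sqrt (a i))^2) * (\<Sum>i\<in>I. (sqrt (b i))^2)" by (rule cs_real)
  also have "\<dots> = (\<Sum>i\<in>I. a i) * (\<Sum>i\<in>I. b i)"
    using assms by (simp cong: sum.cong)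
  finally show ?thesis .
qed

definition ip :: "nat \<Rightarrow> complex mat \<Rightarrow> (nat \<Rightarrow> complex) \<Rightarrow> (nat \<Rightarrow> complex) \<Rightarrow> complex" where
  "ip d R x y = (\<Sum>i<d. \<Sum>j<d. cnj (x i) * R $$ (i,j) * y j)"

lemma herm_cnj:
  assumes "hermitian_mat d X" "a < d" "i < d"
  shows "cnj (X $$ (a,i)) = X $$ (i,a)"
  using assms unfolding hermitian_mat_def by (metis complex_cnj_cnj)

lemma ip_expand:
  "ip d R (\<lambda>i. x i + c * y i) (\<lambda>i. x i + c * y i) =
   ip d R x x + c * ip d R x y + cnj c * ip d R y x + cnj c * c * ip d R y y"
  by (simp add: ip_def algebra_simps sum.distrib sum_distrib_left)

lemma ip_herm:
  assumes "hermitian_mat d R"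
  shows "ip d R x y = cnj (ip d R y x)"
proof -
  have "cnj (ip d R y x) = (\<Sum>i<d. \<Sum>j<d. y i * cnj (R $$ (i,j)) * cnj (x j))"
    by (simp add: ip_def cnj_sum)
  also have "\<dots> = (\<Sum>i<d. \<Sum>j<d. y i * R $$ (j,i) * cnj (x j))"
    by (intro sum.cong refl) (simp add: herm_cnj[OF assms])
  also have "\<dots> = ip d R x y"
    unfolding ip_def by (subst sum.swap) (simp add: algebra_simps)
  finally show ?thesis by simp
qed

lemma ip_psd:
  assumes "psd_mat d R"
  shows "0 \<le> Re (ip d R x x)"
proof -
  have R: "R \<in> carrier_mat d d" using assms unfolding psd_mat_def hermitian_mat_def by blast
  let ?v = "vec d x"
  have "0 \<le> Re (conjugate ?v \<bullet> (R *\<^sub>v ?v))"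
    using assms unfolding psd_mat_def by auto
  also have "conjugate ?v \<bullet> (R *\<^sub>v ?v) = ip d R x x"
    using R unfolding ip_def
    by (auto simp: scalar_prod_def atLeast0LessThan sum_distrib_left algebra_simps intro!: sum.cong)
  finally show ?thesis .
qed

lemma ip_cs:
  assumes "hermitian_mat d R" "\<And>z. 0 \<le> Re (ip d R z z)"
  shows "(cmod (ip d R x y))^2 \<le> Re (ip d R x x) * Re (ip d R y y)"
proof -
  define z where "z = ip d R x y"
  define A where "A = Re (ip d R x x)"
  define C where "C = Re (ip d R y y)"
  have yx: "ip d R y x = cnj z" using ip_herm[OF assms(1), of y x] z_def by simp
  have main: "0 \<le> A - 2 * t * (cmod z)^2 + t^2 * (cmod z)^2 * C" for t :: real
  proof -
    define c where "c = - (of_real t) * cnj z"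
    have "0 \<le> Re (ip d R (\<lambda>i. x i + c * y i) (\<lambda>i. x i + c * y i))" by (rule assms(2))
    also have "\<dots> = Re (ip d R x x + c * z + cnj c * cnj z + cnj c * c * ip d R y y)"
      by (simp add: ip_expand z_def yx)
    also have "\<dots> = A - 2 * t * (cmod z)^2 + t^2 * (cmod z)^2 * C"
    proof -
      have zz: "z * cnj z = of_real ((cmod z)^2)" by (rule complex_norm_square[symmetric])
      have cz: "c * z = - of_real (t * (cmod z)^2)"
        unfolding c_def of_real_mult zz[symmetric] by (simp add: algebra_simps)
      have cc: "cnj c * c = of_real (t^2 * (cmod z)^2)"
        unfolding c_def of_real_mult zz[symmetric] by (simp add: algebra_simps power2_eq_square)
      have e1: "cnj c * cnj z = cnj (c * z)" by simp
      have "Re (ip d R x x + c * z + cnj c * cnj z + cnj c * c * ip d R y y)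
          = A + Re (c * z) + Re (cnj (c * z)) + Re (cnj c * c * ip d R y y)"
        unfolding e1 A_def by simp
      also have "\<dots> = A - 2 * t * (cmod z)^2 + t^2 * (cmod z)^2 * C"
        unfolding cz cc C_def by simp
      finally show ?thesis .
    qed
    finally show ?thesis .
  qed
  have C0: "0 \<le> C" using assms(2) C_def by simp
  show ?thesis
  proof (cases "C = 0")
    case True
    show ?thesis
    proof (cases "z = 0")
      case True then show ?thesis using z_def assms(2)[of x] assms(2)[of y] by simp
    next
      case False
      hence zp: "0 < (cmod z)^2" by simp
      have "0 \<le> A - 2 * ((A + 1) / (2 * (cmod z)^2)) * (cmod z)^2"
        using main[of "(A + 1) / (2 * (cmod z)^2)"] \<open>C = 0\<close> by simp
      also have "\<dots> = -1" using zp by (simp add: field_simps)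
      finally show ?thesis by simp
    qed
  next
    case False
    hence Cp: "0 < C" using C0 by simp
    have "0 \<le> A - 2 * (1/C) * (cmod z)^2 + (1/C)^2 * (cmod z)^2 * C" by (rule main)
    also have "\<dots> = A - (cmod z)^2 / C" using Cp by (simp add: field_simps power2_eq_square)
    finally have "(cmod z)^2 / C \<le> A" by simp
    hence "(cmod z)^2 \<le> A * C" using Cp by (simp add: field_simps)
    thus ?thesis by (simp add: z_def A_def C_def)
  qed
qed
definition uv :: "nat \<Rightarrow> nat \<Rightarrow> complex" where "uv i = (\<lambda>a. if a = i then 1 else 0)"

lemma ip_unit_left:
  assumes "i < d"
  shows "ip d R (uv i) y = (\<Sum>j<d. R $$ (i,j) * y j)"
proof -
  have "ip d R (uv i) y = (\<Sum>a<d. if a = i then (\<Sum>j<d. R $$ (i,j) * y j) else 0)"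
    unfolding ip_def uv_def by (intro sum.cong refl) auto
  also have "\<dots> = (\<Sum>j<d. R $$ (i,j) * y j)" using assms by (simp add: sum.delta)
  finally show ?thesis .
qed

lemma ip_unit_both:
  assumes "i < d" "j < d"
  shows "ip d R (uv i) (uv j) = R $$ (i,j)"
proof -
  have "ip d R (uv i) (uv j) = (\<Sum>l<d. R $$ (i,l) * uv j l)" by (rule ip_unit_left[OF assms(1)])
  also have "\<dots> = (\<Sum>l<d. if l = j then R $$ (i,l) else 0)"
    by (intro sum.cong refl) (simp add: uv_def)
  also have "\<dots> = R $$ (i,j)" using assms by (simp add: sum.delta)
  finally show ?thesis .
qed

lemma psd_carrier: "psd_mat d R \<Longrightarrow> R \<in> carrier_mat d d"
  unfolding psd_mat_def hermitian_mat_def by blast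

lemma psd_herm: "psd_mat d R \<Longrightarrow> hermitian_mat d R"
  unfolding psd_mat_def by auto

lemma herm_carrier: "hermitian_mat d R \<Longrightarrow> R \<in> carrier_mat d d"
  unfolding hermitian_mat_def by blast

lemma diag_nonneg:
  assumes "psd_mat d R" "i < d"
  shows "0 \<le> Re (R $$ (i,i))"
  using ip_psd[OF assms(1), of "uv i"] ip_unit_both[OF assms(2) assms(2)] by simp

lemma offdiag_bound:
  assumes "psd_mat d R" "i < d" "j < d"
  shows "(cmod (R $$ (i,j)))^2 \<le> Re (R $$ (i,i)) * Re (R $$ (j,j))"
  using ip_cs[OF psd_herm[OF assms(1)] ip_psd[OF assms(1)], of "uv i" "uv j"]
  by (simp add: ip_unit_both assms)

lemma trace_re:
  assumes "psd_mat d R" "mat_trace R = 1"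
  shows "(\<Sum>i<d. Re (R $$ (i,i))) = 1"
proof -
  have "dim_row R = d" using psd_carrier[OF assms(1)] by auto
  hence "(\<Sum>i<d. R $$ (i,i)) = 1" using assms(2) unfolding mat_trace_def by simp
  hence "Re (\<Sum>i<d. R $$ (i,i)) = 1" by simp
  thus ?thesis by (simp add: Re_sum)
qed

lemma jensen:
  assumes R: "psd_mat d R" "mat_trace R = 1" and X: "X \<in> carrier_mat d d"
  shows "(cmod (mat_trace (R * X)))^2 \<le> Re (\<Sum>i<d. ip d R (\<lambda>b. X $$ (b,i)) (\<lambda>b. X $$ (b,i)))"
proof -
  have Rc: "R \<in> carrier_mat d d" by (rule psd_carrier[OF R(1)])
  define z where "z i = ip d R (uv i) (\<lambda>b. X $$ (b,i))" for i
  have tr: "mat_trace (R * X) = (\<Sum>i<d. z i)"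
    unfolding trace_mult[OF Rc X] z_def by (intro sum.cong refl) (simp add: ip_unit_left)
  have zb: "(cmod (z i))^2 \<le> Re (R $$ (i,i)) * Re (ip d R (\<lambda>b. X $$ (b,i)) (\<lambda>b. X $$ (b,i)))"
    if "i < d" for i
    using ip_cs[OF psd_herm[OF R(1)] ip_psd[OF R(1)], of "uv i" "\<lambda>b. X $$ (b,i)"] that
    by (simp add: z_def ip_unit_both)
  have "cmod (mat_trace (R * X)) \<le> (\<Sum>i<d. cmod (z i))" unfolding tr by (rule norm_sum)
  hence "(cmod (mat_trace (R * X)))^2 \<le> (\<Sum>i<d. cmod (z i))^2" by (simp add: power_mono)
  also have "\<dots> \<le> (\<Sum>i<d. Re (R $$ (i,i))) * (\<Sum>i<d. Re (ip d R (\<lambda>b. X $$ (b,i)) (\<lambda>b. X $$ (b,i))))"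
    by (rule rs_lemma) (auto simp: diag_nonneg[OF R(1)] ip_psd[OF R(1)] zb)
  also have "\<dots> = Re (\<Sum>i<d. ip d R (\<lambda>b. X $$ (b,i)) (\<lambda>b. X $$ (b,i)))"
    using trace_re[OF R] by (simp add: Re_sum)
  finally show ?thesis .
qed

lemma col_sum_herm:
  assumes X: "hermitian_mat d X" and R: "R \<in> carrier_mat d d"
  shows "(\<Sum>i<d. ip d R (\<lambda>b. X $$ (b,i)) (\<lambda>b. X $$ (b,i))) = mat_trace (R * (X * X))"
proof -
  have Xc: "X \<in> carrier_mat d d" by (rule herm_carrier[OF X])
  have "(\<Sum>i<d. ip d R (\<lambda>b. X $$ (b,i)) (\<lambda>b. X $$ (b,i)))
      = (\<Sum>i<d. \<Sum>a<d. \<Sum>b<d. X $$ (i,a) * R $$ (a,b) * X $$ (b,i))"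
    unfolding ip_def by (simp add: herm_cnj[OF X])
  also have "\<dots> = (\<Sum>a<d. \<Sum>i<d. \<Sum>b<d. X $$ (i,a) * R $$ (a,b) * X $$ (b,i))"
    by (rule sum.swap)
  also have "\<dots> = (\<Sum>a<d. \<Sum>b<d. \<Sum>i<d. X $$ (i,a) * R $$ (a,b) * X $$ (b,i))"
    by (rule sum.cong[OF refl]) (rule sum.swap)
  also have "\<dots> = (\<Sum>a<d. \<Sum>b<d. R $$ (a,b) * (X * X) $$ (b,a))"
  proof (intro sum.cong refl)
    fix a b assume "a \<in> {..<d}" "b \<in> {..<d}"
    hence a: "a < d" and b: "b < d" by auto
    show "(\<Sum>i<d. X $$ (i,a) * R $$ (a,b) * X $$ (b,i)) = R $$ (a,b) * (X * X) $$ (b,a)"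
      unfolding mult_entry[OF Xc Xc b a] by (simp add: sum_distrib_left algebra_simps)
  qed
  also have "\<dots> = mat_trace (R * (X * X))"
    using R Xc by (simp add: trace_mult[of R d "X * X"])
  finally show ?thesis .
qed

lemma frob:
  assumes R: "psd_mat d R" "mat_trace R = 1" and P: "P \<in> carrier_mat d d"
  shows "(cmod (mat_trace (R * P)))^2 \<le> (\<Sum>i<d. \<Sum>j<d. (cmod (P $$ (i,j)))^2)"
proof -
  have Rc: "R \<in> carrier_mat d d" by (rule psd_carrier[OF R(1)])
  let ?I = "{..<d} \<times> {..<d}"
  have tr: "mat_trace (R * P) = (\<Sum>(i,j)\<in>?I. R $$ (i,j) * P $$ (j,i))"
    unfolding trace_mult[OF Rc P] by (simp add: sum.cartesian_product)
  have "cmod (mat_trace (R * P)) \<le> (\<Sum>(i,j)\<in>?I. cmod (R $$ (i,j)) * cmod (P $$ (j,i)))"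
    unfolding tr by (rule order.trans[OF norm_sum]) (simp add: case_prod_unfold norm_mult)
  hence "(cmod (mat_trace (R * P)))^2 \<le> (\<Sum>(i,j)\<in>?I. cmod (R $$ (i,j)) * cmod (P $$ (j,i)))^2"
    by (simp add: power_mono)
  also have "\<dots> \<le> (\<Sum>(i,j)\<in>?I. Re (R $$ (i,i)) * Re (R $$ (j,j))) * (\<Sum>(i,j)\<in>?I. (cmod (P $$ (j,i)))^2)"
  proof (rule rs_lemma)
    fix x assume x: "x \<in> ?I"
    obtain i j where ij: "x = (i,j)" "i < d" "j < d" using x by auto
    show "0 \<le> (case x of (i, j) \<Rightarrow> Re (R $$ (i, i)) * Re (R $$ (j, j)))"
      using ij diag_nonneg[OF R(1)] by simp
    show "0 \<le> (case x of (i, j) \<Rightarrow> (cmod (P $$ (j, i)))\<^sup>2)" by (simp add: case_prod_unfold)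
    show "0 \<le> (case x of (i, j) \<Rightarrow> cmod (R $$ (i, j)) * cmod (P $$ (j, i)))" by (simp add: case_prod_unfold)
    have "(cmod (R $$ (i, j)) * cmod (P $$ (j, i)))^2 = (cmod (R $$ (i, j)))^2 * (cmod (P $$ (j, i)))^2"
      by (simp add: power_mult_distrib)
    also have "\<dots> \<le> (Re (R $$ (i, i)) * Re (R $$ (j, j))) * (cmod (P $$ (j, i)))^2"
      by (intro mult_right_mono offdiag_bound[OF R(1) ij(2,3)]) simp
    finally show "(case x of (i, j) \<Rightarrow> cmod (R $$ (i, j)) * cmod (P $$ (j, i)))\<^sup>2
         \<le> (case x of (i, j) \<Rightarrow> Re (R $$ (i, i)) * Re (R $$ (j, j))) *
            (case x of (i, j) \<Rightarrow> (cmod (P $$ (j, i)))\<^sup>2)" using ij by simp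
  qed
  also have "(\<Sum>(i,j)\<in>?I. Re (R $$ (i,i)) * Re (R $$ (j,j))) = 1"
    using trace_re[OF R] by (simp add: sum.cartesian_product[symmetric] sum_product[symmetric])
  also have "(\<Sum>(i,j)\<in>?I. (cmod (P $$ (j,i)))^2) = (\<Sum>i<d. \<Sum>j<d. (cmod (P $$ (i,j)))^2)"
    by (simp add: sum.cartesian_product[symmetric]) (rule sum.swap)
  finally show ?thesis by simp
qed

lemma frob_herm:
  assumes P: "hermitian_mat d P"
  shows "(\<Sum>i<d. \<Sum>j<d. (cmod (P $$ (i,j)))^2) = Re (mat_trace (P * P))"
proof -
  have Pc: "P \<in> carrier_mat d d" by (rule herm_carrier[OF P])
  have "mat_trace (P * P) = (\<Sum>i<d. \<Sum>l<d. P $$ (i,l) * P $$ (l,i))" by (rule trace_mult[OF Pc Pc])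
  also have "\<dots> = (\<Sum>i<d. \<Sum>l<d. of_real ((cmod (P $$ (i,l)))^2))"
  proof (intro sum.cong refl)
    fix i l assume "i \<in> {..<d}" "l \<in> {..<d}"
    hence e: "P $$ (l,i) = cnj (P $$ (i,l))" using herm_cnj[OF P, of i l] by simp
    show "P $$ (i,l) * P $$ (l,i) = of_real ((cmod (P $$ (i,l)))^2)"
      unfolding e by (rule complex_norm_square[symmetric])
  qed
  finally show ?thesis by (simp add: Re_sum)
qed

lemma pow_add_mat:
  assumes "A \<in> carrier_mat d d"
  shows "A ^\<^sub>m (a + b) = A ^\<^sub>m a * A ^\<^sub>m b"
proof (induction b)
  case 0 then show ?case using assms by simp
next
  case (Suc b)
  have "A ^\<^sub>m (a + Suc b) = A ^\<^sub>m (a + b) * A" by simp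
  also have "\<dots> = A ^\<^sub>m a * A ^\<^sub>m b * A" using Suc by simp
  also have "\<dots> = A ^\<^sub>m a * (A ^\<^sub>m b * A)" using assms by (simp add: assoc_mult_mat[of _ d d _ d _ d])
  finally show ?case by simp
qed

lemma pow_suc_left: "A \<in> carrier_mat d d \<Longrightarrow> A ^\<^sub>m (Suc k) = A * A ^\<^sub>m k"
  using pow_add_mat[of A d 1 k] by simp

lemma herm_pow:
  assumes "hermitian_mat d A"
  shows "hermitian_mat d (A ^\<^sub>m k)"
proof (induction k)
  case 0 then show ?case using assms unfolding hermitian_mat_def by auto
next
  case (Suc k)
  have A: "A \<in> carrier_mat d d" by (rule herm_carrier[OF assms])
  have Ak: "A ^\<^sub>m k \<in> carrier_mat d d" using A by simp
  show ?case unfolding hermitian_mat_def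
  proof (intro conjI allI impI)
    show "A ^\<^sub>m Suc k \<in> carrier_mat d d" by (rule pow_carrier_mat[OF A])
    fix i j assume ij: "i < d" "j < d"
    have "(A ^\<^sub>m Suc k) $$ (i,j) = (A * A ^\<^sub>m k) $$ (i,j)" unfolding pow_suc_left[OF A] ..
    also have "\<dots> = (\<Sum>l<d. A $$ (i,l) * (A ^\<^sub>m k) $$ (l,j))" by (rule mult_entry[OF A Ak ij])
    also have "\<dots> = (\<Sum>l<d. cnj ((A ^\<^sub>m k) $$ (j,l) * A $$ (l,i)))"
    proof (intro sum.cong refl)
      fix l assume "l \<in> {..<d}"
      hence l: "l < d" by simp
      have e1: "A $$ (i,l) = cnj (A $$ (l,i))" using assms ij l unfolding hermitian_mat_def by blast
      have e2: "(A ^\<^sub>m k) $$ (l,j) = cnj ((A ^\<^sub>m k) $$ (j,l))" using Suc ij l unfolding hermitian_mat_def by blast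
      show "A $$ (i,l) * (A ^\<^sub>m k) $$ (l,j) = cnj ((A ^\<^sub>m k) $$ (j,l) * A $$ (l,i))"
        unfolding e1 e2 by (simp add: mult.commute)
    qed
    also have "\<dots> = cnj ((A ^\<^sub>m k * A) $$ (j,i))" by (simp add: mult_entry[OF Ak A ij(2,1)] cnj_sum)
    finally show "(A ^\<^sub>m Suc k) $$ (i,j) = cnj ((A ^\<^sub>m Suc k) $$ (j,i))" by simp
  qed
qed

lemma LB:
  assumes R: "psd_mat d R" "mat_trace R = 1" and S: "hermitian_mat d S"
    and t: "0 \<le> t" "t \<le> cmod (mat_trace (R * S))"
  shows "t ^ (2 ^ Suc j) \<le> Re (mat_trace (S ^\<^sub>m (2 ^ Suc j)))"
proof -
  have Sc: "S \<in> carrier_mat d d" by (rule herm_carrier[OF S])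
  have Rc: "R \<in> carrier_mat d d" by (rule psd_carrier[OF R(1)])
  define T where "T j = S ^\<^sub>m (2 ^ j)" for j
  have Th: "hermitian_mat d (T j)" for j unfolding T_def by (rule herm_pow[OF S])
  have Tc: "T j \<in> carrier_mat d d" for j using Sc unfolding T_def by simp
  have TS: "T (Suc j) = T j * T j" for j
    unfolding T_def using pow_add_mat[OF Sc, of "2^j" "2^j"] by (simp add: mult_2)
  have step: "(cmod (mat_trace (R * T j)))^2 \<le> cmod (mat_trace (R * T (Suc j)))" for j
  proof -
    have "(cmod (mat_trace (R * T j)))^2 \<le> Re (\<Sum>i<d. ip d R (\<lambda>b. T j $$ (b,i)) (\<lambda>b. T j $$ (b,i)))"
      by (rule jensen[OF R Tc])
    also have "\<dots> = Re (mat_trace (R * T (Suc j)))" unfolding TS col_sum_herm[OF Th Rc] ..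
    also have "\<dots> \<le> cmod (mat_trace (R * T (Suc j)))" by (rule complex_Re_le_cmod)
    finally show ?thesis .
  qed
  have claim: "t ^ (2 ^ j) \<le> cmod (mat_trace (R * T j))" for j
  proof (induction j)
    case 0 then show ?case using t Sc by (simp add: T_def)
  next
    case (Suc j)
    have "t ^ (2 ^ Suc j) = (t ^ (2 ^ j))^2" by (simp add: power_mult[symmetric] mult.commute)
    also have "\<dots> \<le> (cmod (mat_trace (R * T j)))^2" using Suc t by (simp add: power_mono)
    also have "\<dots> \<le> cmod (mat_trace (R * T (Suc j)))" by (rule step)
    finally show ?case .
  qed
  have "t ^ (2 ^ Suc j) = (t ^ (2 ^ j))^2" by (simp add: power_mult[symmetric] mult.commute)
  also have "\<dots> \<le> (cmod (mat_trace (R * T j)))^2" using claim[of j] t by (simp add: power_mono)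
  also have "\<dots> \<le> (\<Sum>i<d. \<Sum>l<d. (cmod (T j $$ (i,l)))^2)" by (rule frob[OF R Tc])
  also have "\<dots> = Re (mat_trace (T (Suc j)))" unfolding TS frob_herm[OF Th] ..
  finally show ?thesis unfolding T_def .
qed



definition nv :: "nat \<Rightarrow> (nat \<Rightarrow> complex) \<Rightarrow> real" where
  "nv d x = (\<Sum>i<d. (cmod (x i))^2)"

definition ap :: "nat \<Rightarrow> complex mat \<Rightarrow> (nat \<Rightarrow> complex) \<Rightarrow> (nat \<Rightarrow> complex)" where
  "ap d A x = (\<lambda>i. \<Sum>j<d. A $$ (i,j) * x j)"

lemma nv_nonneg: "0 \<le> nv d x"
  unfolding nv_def by (simp add: sum_nonneg)

lemma nv_cong: "(\<And>i. i < d \<Longrightarrow> x i = y i) \<Longrightarrow> nv d x = nv d y"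
  unfolding nv_def by (intro sum.cong) auto

lemma ap_mult:
  assumes "A \<in> carrier_mat d d" "B \<in> carrier_mat d d" "i < d"
  shows "ap d (A * B) x i = ap d A (ap d B x) i"
proof -
  have "ap d (A * B) x i = (\<Sum>j<d. (\<Sum>l<d. A $$ (i,l) * B $$ (l,j)) * x j)"
    unfolding ap_def by (intro sum.cong refl) (subst mult_entry[OF assms(1,2,3)], auto)
  also have "\<dots> = (\<Sum>j<d. \<Sum>l<d. A $$ (i,l) * (B $$ (l,j) * x j))"
    by (simp add: sum_distrib_right mult.assoc)
  also have "\<dots> = (\<Sum>l<d. \<Sum>j<d. A $$ (i,l) * (B $$ (l,j) * x j))" by (rule sum.swap)
  also have "\<dots> = ap d A (ap d B x) i" unfolding ap_def by (simp add: sum_distrib_left)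
  finally show ?thesis .
qed

lemma ip_one: "ip d (1\<^sub>m d) u v = (\<Sum>i<d. cnj (u i) * v i)"
proof -
  have "ip d (1\<^sub>m d) u v = (\<Sum>i<d. \<Sum>j<d. if j = i then cnj (u i) * v j else 0)"
    unfolding ip_def by (intro sum.cong refl) auto
  also have "\<dots> = (\<Sum>i<d. cnj (u i) * v i)" by (simp add: sum.delta)
  finally show ?thesis .
qed

lemma nv_ip: "nv d x = Re (ip d (1\<^sub>m d) x x)"
  unfolding nv_def ip_one Re_sum
  by (intro sum.cong refl) (simp add: complex_norm_square[symmetric] mult.commute)

lemma herm_one: "hermitian_mat d (1\<^sub>m d)"
  unfolding hermitian_mat_def by auto

lemma cs_one: "(cmod (ip d (1\<^sub>m d) x y))^2 \<le> nv d x * nv d y"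
  unfolding nv_ip by (rule ip_cs[OF herm_one]) (simp add: nv_ip[symmetric] nv_nonneg)

lemma ip1_adj:
  assumes Y: "hermitian_mat d Y"
  shows "ip d (1\<^sub>m d) (ap d Y u) v = ip d (1\<^sub>m d) u (ap d Y v)"
proof -
  have "ip d (1\<^sub>m d) (ap d Y u) v = (\<Sum>j<d. \<Sum>i<d. cnj (u i) * Y $$ (i,j) * v j)"
    unfolding ip_one ap_def by (simp add: cnj_sum sum_distrib_right sum_distrib_left herm_cnj[OF Y] algebra_simps)
  also have "\<dots> = (\<Sum>i<d. \<Sum>j<d. cnj (u i) * Y $$ (i,j) * v j)" by (rule sum.swap)
  also have "\<dots> = ip d (1\<^sub>m d) u (ap d Y v)"
    unfolding ip_one ap_def by (simp add: sum_distrib_left algebra_simps)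
  finally show ?thesis .
qed

lemma ap_herm_sq:
  assumes Y: "hermitian_mat d Y"
  shows "ip d (1\<^sub>m d) (ap d Y x) (ap d Y x) = ip d (1\<^sub>m d) x (ap d (Y * Y) x)"
proof -
  have Yc: "Y \<in> carrier_mat d d" by (rule herm_carrier[OF Y])
  have "ip d (1\<^sub>m d) (ap d Y x) (ap d Y x) = ip d (1\<^sub>m d) x (ap d Y (ap d Y x))"
    by (rule ip1_adj[OF Y])
  also have "\<dots> = ip d (1\<^sub>m d) x (ap d (Y * Y) x)"
    unfolding ip_one by (intro sum.cong refl) (simp add: ap_mult[OF Yc Yc])
  finally show ?thesis .
qed

lemma power_trick:
  assumes H: "hermitian_mat d H" and x: "nv d x = 1"
  shows "nv d (ap d H x) ^ (2 ^ j) \<le> nv d (ap d (H ^\<^sub>m (2 ^ j)) x)"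
proof (induction j)
  case 0
  have "H \<in> carrier_mat d d" by (rule herm_carrier[OF H])
  then show ?case by simp
next
  case (Suc j)
  have Hc: "H \<in> carrier_mat d d" by (rule herm_carrier[OF H])
  define Y where "Y = H ^\<^sub>m (2 ^ j)"
  have Yh: "hermitian_mat d Y" unfolding Y_def by (rule herm_pow[OF H])
  have YY: "Y * Y = H ^\<^sub>m (2 ^ Suc j)"
    unfolding Y_def using pow_add_mat[OF Hc, of "2^j" "2^j"] by (simp add: mult_2)
  have "nv d (ap d H x) ^ (2 ^ Suc j) = (nv d (ap d H x) ^ (2 ^ j))^2"
    by (simp add: power_mult[symmetric] mult.commute)
  also have "\<dots> \<le> (nv d (ap d Y x))^2"
    using Suc by (simp add: power_mono nv_nonneg Y_def)
  also have "\<dots> = (Re (ip d (1\<^sub>m d) x (ap d (Y * Y) x)))^2"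
    unfolding nv_ip ap_herm_sq[OF Yh] ..
  also have "\<dots> \<le> (cmod (ip d (1\<^sub>m d) x (ap d (Y * Y) x)))^2"
    using abs_Re_le_cmod by (metis abs_ge_zero power2_abs power_mono)
  also have "\<dots> \<le> nv d x * nv d (ap d (Y * Y) x)" by (rule cs_one)
  finally show ?case using x YY by simp
qed

lemma nv_ap_bound:
  assumes "\<And>i j. i < d \<Longrightarrow> j < d \<Longrightarrow> cmod (Y $$ (i,j)) \<le> c"
  shows "nv d (ap d Y x) \<le> d * (d * c^2) * nv d x"
proof -
  have row: "(cmod (ap d Y x i))^2 \<le> d * c^2 * nv d x" if i: "i < d" for i
  proof -
    have "cmod (ap d Y x i) \<le> (\<Sum>j<d. cmod (Y $$ (i,j)) * cmod (x j))"
      unfolding ap_def by (rule order.trans[OF norm_sum]) (simp add: norm_mult)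
    hence "(cmod (ap d Y x i))^2 \<le> (\<Sum>j<d. cmod (Y $$ (i,j)) * cmod (x j))^2"
      by (simp add: power_mono)
    also have "\<dots> \<le> (\<Sum>j<d. (cmod (Y $$ (i,j)))^2) * (\<Sum>j<d. (cmod (x j))^2)" by (rule cs_real)
    also have "(\<Sum>j<d. (cmod (Y $$ (i,j)))^2) \<le> (\<Sum>j<d. c^2)"
      using assms[OF i] by (intro sum_mono power_mono) auto
    hence "(\<Sum>j<d. (cmod (Y $$ (i,j)))^2) * (\<Sum>j<d. (cmod (x j))^2) \<le> (\<Sum>j<d. c^2) * (\<Sum>j<d. (cmod (x j))^2)"
      by (intro mult_right_mono) (auto simp: sum_nonneg)
    finally show ?thesis by (simp add: nv_def)
  qed
  have "nv d (ap d Y x) \<le> (\<Sum>i<d. d * c^2 * nv d x)"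
    unfolding nv_def[of d "ap d Y x"] using row by (intro sum_mono) auto
  thus ?thesis by simp
qed

lemma ap_scale: "ap d A (\<lambda>i. of_real r * x i) i = of_real r * ap d A x i"
  unfolding ap_def by (simp add: sum_distrib_left algebra_simps)

lemma nv_scale: "nv d (\<lambda>i. of_real r * x i) = r^2 * nv d x"
  unfolding nv_def by (simp add: sum_distrib_left norm_mult power_mult_distrib)

lemma spec_norm_ge:
  assumes "A \<in> carrier_mat d d" "eigenvalue A e"
  shows "cmod e \<le> spec_norm A"
proof -
  have eq: "{cmod e | e. eigenvalue A e} = cmod ` spectrum A" unfolding spectrum_def by auto
  have "finite (spectrum A)" by (rule card_finite_spectrum(1)[OF assms(1)])
  thus ?thesis unfolding spec_norm_def eq using assms(2)
    by (intro Max_ge) (auto simp: spectrum_def)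
qed

lemma spec_norm_nonneg:
  assumes "A \<in> carrier_mat d d" "0 < d"
  shows "0 \<le> spec_norm A"
proof -
  obtain e where "e \<in> spectrum A" using spectrum_non_empty[OF assms] by auto
  hence "eigenvalue A e" unfolding spectrum_def by auto
  from spec_norm_ge[OF assms(1) this] show ?thesis by (meson norm_ge_zero order_trans)
qed

lemma OB_unit:
  assumes A: "hermitian_mat d A" and d: "0 < d" and M: "0 \<le> M" and M': "M < M'"
    and ev: "\<And>e. eigenvalue A e \<Longrightarrow> cmod e \<le> M" and x: "nv d x = 1"
  shows "nv d (ap d A x) \<le> M'^2"
proof -
  have Ac: "A \<in> carrier_mat d d" by (rule herm_carrier[OF A])
  have M'p: "0 < M'" using M M' by simp
  define a where "a = complex_of_real (1 / M')"
  define A' where "A' = a \<cdot>\<^sub>m A"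
  have A'c: "A' \<in> carrier_mat d d" using Ac unfolding A'_def by simp
  have A'e: "A' $$ (i,j) = a * A $$ (i,j)" if "i < d" "j < d" for i j
    using that Ac unfolding A'_def by simp
  have A'h: "hermitian_mat d A'"
    unfolding hermitian_mat_def by (auto simp: A'e a_def A'c herm_cnj[OF A])
  have ev': "cmod e < 1" if e_ev: "eigenvalue A' e" for e
  proof -
    obtain v where v: "v \<in> carrier_vec d" "v \<noteq> 0\<^sub>v d" "A' *\<^sub>v v = e \<cdot>\<^sub>v v"
      using e_ev A'c unfolding eigenvalue_def eigenvector_def by (auto simp: carrier_matD)
    have "A *\<^sub>v v = (of_real M' * e) \<cdot>\<^sub>v v"
    proof (rule eq_vecI)
      fix i assume "i < dim_vec ((of_real M' * e) \<cdot>\<^sub>v v)"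
      hence i: "i < d" using v by simp
      have "(A' *\<^sub>v v) $ i = a * (A *\<^sub>v v) $ i"
        using i v(1) Ac A'c by (simp add: scalar_prod_def sum_distrib_left A'e algebra_simps)
      hence "a * (A *\<^sub>v v) $ i = e * v $ i" using v(3) i v(1) by simp
      hence "(A *\<^sub>v v) $ i = of_real M' * e * v $ i"
        using M'p unfolding a_def by (simp add: field_simps)
      thus "(A *\<^sub>v v) $ i = ((of_real M' * e) \<cdot>\<^sub>v v) $ i" using i v by simp
    qed (use v Ac in auto)
    hence "eigenvalue A (of_real M' * e)"
      unfolding eigenvalue_def eigenvector_def using v Ac by auto
    hence "cmod (of_real M' * e) \<le> M" by (rule ev)
    hence "M' * cmod e \<le> M" using M'p by (simp add: norm_mult)
    hence "M' * cmod e < M' * 1" using M' by simp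
    thus ?thesis using M'p by (simp only: mult_less_cancel_left_pos)
  qed
  have "spectral_radius A' \<in> norm ` spectrum A'" by (rule spectral_radius_mem_max(1)[OF A'c d])
  then obtain e where "eigenvalue A' e" "spectral_radius A' = cmod e" unfolding spectrum_def by auto
  hence sr: "spectral_radius A' < 1" using ev' by simp
  obtain c where c: "\<And>k. norm_bound (A' ^\<^sub>m k) c"
    using spectral_radius_jnf_norm_bound_less_1_upper_triangular[OF A'c sr] by auto
  define K where "K = real d * (real d * c^2)"
  have bound: "nv d (ap d A' x) ^ (2 ^ j) \<le> K" for j
  proof -
    have "nv d (ap d A' x) ^ (2 ^ j) \<le> nv d (ap d (A' ^\<^sub>m (2 ^ j)) x)" by (rule power_trick[OF A'h x])
    also have "\<dots> \<le> K * nv d x"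
      unfolding K_def by (rule nv_ap_bound) (use c A'c in \<open>auto simp: norm_bound_def\<close>)
    finally show ?thesis using x by simp
  qed
  have le1: "nv d (ap d A' x) \<le> 1"
  proof (rule ccontr)
    assume "\<not> ?thesis"
    hence r: "1 < nv d (ap d A' x)" by simp
    obtain n where "K < nv d (ap d A' x) ^ n" using real_arch_pow[OF r] by blast
    also have "\<dots> \<le> nv d (ap d A' x) ^ (2 ^ n)"
      using r by (intro power_increasing) (auto intro: less_imp_le less_exp)
    also have "\<dots> \<le> K" by (rule bound)
    finally show False by simp
  qed
  have apx: "ap d A' x i = a * ap d A x i" if "i < d" for i
    unfolding ap_def using that by (simp add: A'e sum_distrib_left algebra_simps)
  have "nv d (ap d A' x) = nv d (\<lambda>i. of_real (1/M') * ap d A x i)"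
    by (rule nv_cong) (simp add: apx a_def)
  also have "\<dots> = (1/M')^2 * nv d (ap d A x)" by (rule nv_scale)
  finally have "(1/M')^2 * nv d (ap d A x) \<le> 1" using le1 by simp
  thus ?thesis using M'p by (simp add: field_simps power2_eq_square)
qed

lemma OB_M':
  assumes A: "hermitian_mat d A" and d: "0 < d" and M: "0 \<le> M" and M': "M < M'"
    and ev: "\<And>e. eigenvalue A e \<Longrightarrow> cmod e \<le> M"
  shows "nv d (ap d A x) \<le> M'^2 * nv d x"
proof (cases "nv d x = 0")
  case True
  have "x i = 0" if "i < d" for i
  proof -
    have "(cmod (x i))^2 \<le> nv d x"
      unfolding nv_def using that by (intro member_le_sum) auto
    thus ?thesis using True by simp
  qed
  hence "ap d A x i = 0" if "i < d" for i unfolding ap_def by simp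
  hence "nv d (ap d A x) = 0" unfolding nv_def by simp
  thus ?thesis using True by simp
next
  case False
  define s where "s = sqrt (nv d x)"
  have sp: "0 < s" using False nv_nonneg[of d x] unfolding s_def by simp
  have s2: "s^2 = nv d x" unfolding s_def using nv_nonneg by simp
  define y where "y = (\<lambda>i. of_real (1/s) * x i)"
  have ny: "nv d y = 1"
  proof -
    have "nv d y = (1/s)^2 * s^2" unfolding y_def nv_scale s2 ..
    also have "\<dots> = 1" using sp by (simp add: power_divide)
    finally show ?thesis .
  qed
  have "nv d (ap d A y) \<le> M'^2" by (rule OB_unit[OF A d M M' ev ny])
  moreover have "ap d A y = (\<lambda>i. of_real (1/s) * ap d A x i)"
    unfolding y_def by (rule ext) (rule ap_scale)
  hence "nv d (ap d A y) = (1/s)^2 * nv d (ap d A x)" by (simp only: nv_scale)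
  ultimately have "(1/s)^2 * nv d (ap d A x) \<le> M'^2" by simp
  hence "nv d (ap d A x) \<le> M'^2 * s^2" using sp by (simp add: field_simps power2_eq_square)
  thus ?thesis using s2 by simp
qed

lemma OB:
  assumes A: "hermitian_mat d A" and d: "0 < d" and M: "0 \<le> M"
    and ev: "\<And>e. eigenvalue A e \<Longrightarrow> cmod e \<le> M"
  shows "nv d (ap d A x) \<le> M^2 * nv d x"
proof (rule ccontr)
  assume "\<not> ?thesis"
  hence L: "M^2 * nv d x < nv d (ap d A x)" by simp
  have N: "0 < nv d x"
  proof (rule ccontr)
    assume "\<not> 0 < nv d x"
    hence "nv d x = 0" using nv_nonneg[of d x] by simp
    moreover have "nv d (ap d A x) \<le> (M+1)^2 * nv d x" by (rule OB_M'[OF A d M _ ev]) simp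
    ultimately show False using L by simp
  qed
  define q where "q = (nv d (ap d A x) / nv d x + M^2) / 2"
  have q1: "M^2 < q" using L N unfolding q_def by (simp add: field_simps)
  have q2: "q * nv d x < nv d (ap d A x)" using L N unfolding q_def by (simp add: field_simps)
  define M' where "M' = sqrt q"
  have "M < M'" unfolding M'_def using q1 M by (metis real_less_rsqrt)
  have "0 \<le> M^2" by simp
  hence "0 \<le> q" using q1 by linarith
  hence "M'^2 = q" unfolding M'_def by simp
  have "nv d (ap d A x) \<le> M'^2 * nv d x" by (rule OB_M'[OF A d M \<open>M < M'\<close> ev])
  thus False using q2 \<open>M'^2 = q\<close> by simp
qed



definition WW :: "nat \<Rightarrow> nat \<Rightarrow> nat list set" where
  "WW k q = {w. set w \<subseteq> {..<k} \<and> length w = q}"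

definition EW :: "nat \<Rightarrow> nat \<Rightarrow> nat list set" where
  "EW k q = {w. set w \<subseteq> {..<k} \<and> length w = q \<and> (\<forall>b. even (count_list w b))}"

lemma finite_WW: "finite (WW k q)"
  unfolding WW_def by (rule finite_lists_length_eq) simp

lemma EW_sub: "EW k q \<subseteq> WW k q"
  unfolding EW_def WW_def by auto

lemma finite_EW: "finite (EW k q)"
  using finite_subset[OF EW_sub finite_WW] .

lemma EW_step:
  "EW k (Suc (Suc q)) \<subseteq> (\<lambda>(a,j,u). a # (take j u @ a # drop j u)) ` ({..<k} \<times> {..q} \<times> EW k q)"
proof
  fix w assume w: "w \<in> EW k (Suc (Suc q))"
  then obtain a w' where ww: "w = a # w'" unfolding EW_def by (cases w) auto
  have ev: "even (count_list w b)" for b using w unfolding EW_def by auto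
  have "odd (count_list w' a)" using ev[of a] unfolding ww by simp
  hence "count_list w' a \<noteq> 0" by presburger
  hence "a \<in> set w'" by (simp add: count_list_0_iff)
  then obtain ys zs where yz: "w' = ys @ a # zs" "a \<notin> set ys" using split_list_first by metis
  define u where "u = ys @ zs"
  have lw: "length w = Suc (Suc q)" and sw: "set w \<subseteq> {..<k}" using w unfolding EW_def by auto
  have lu: "length u = q" using lw unfolding ww yz u_def by simp
  have cnt: "count_list w b = count_list u b + (if b = a then 2 else 0)" for b
    unfolding ww yz u_def by auto
  have "even (count_list u b)" for b using ev[of b] cnt[of b] by (cases "b = a") auto
  moreover have "set u \<subseteq> {..<k}" using sw unfolding ww yz u_def by auto
  ultimately have uE: "u \<in> EW k q" using lu unfolding EW_def by auto
  have ak: "a < k" using sw ww by auto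
  have jq: "length ys \<le> q" using lu unfolding u_def by simp
  have "w = a # (take (length ys) u @ a # drop (length ys) u)" unfolding ww yz u_def by simp
  thus "w \<in> (\<lambda>(a,j,u). a # (take j u @ a # drop j u)) ` ({..<k} \<times> {..q} \<times> EW k q)"
    using ak jq uE by force
qed

lemma card_EW: "card (EW k (2 * p)) \<le> k ^ p * (2 * p) ^ p"
proof (induction p)
  case 0
  have "EW k 0 \<subseteq> {[]}" unfolding EW_def by auto
  hence "card (EW k 0) \<le> card {[]::nat list}" by (intro card_mono) auto
  then show ?case by simp
next
  case (Suc p)
  let ?D = "{..<k} \<times> {..2*p} \<times> EW k (2*p)"
  have fD: "finite ?D" using finite_EW by auto
  have "card (EW k (2 * Suc p)) \<le> card ((\<lambda>(a,j,u). a # (take j u @ a # drop j u)) ` ?D)"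
    using EW_step[of k "2*p"] fD by (intro card_mono) auto
  also have "\<dots> \<le> card ?D" by (rule card_image_le[OF fD])
  also have "\<dots> = k * (2*p+1) * card (EW k (2*p))" by (simp add: card_cartesian_product algebra_simps)
  also have "\<dots> \<le> k * (2*p+1) * (k ^ p * (2 * p) ^ p)" using Suc by simp
  also have "\<dots> = k ^ Suc p * ((2*p+1) * (2*p)^p)" by (simp add: algebra_simps)
  also have "(2*p+1) * (2*p)^p \<le> (2 * Suc p) * (2 * Suc p)^p"
    by (intro mult_mono power_mono) auto
  hence "k ^ Suc p * ((2*p+1) * (2*p)^p) \<le> k ^ Suc p * ((2 * Suc p) * (2 * Suc p)^p)" by simp
  also have "\<dots> = k ^ Suc p * (2 * Suc p) ^ Suc p" by simp
  finally show ?case .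
qed

definition sg :: "bool list \<Rightarrow> nat \<Rightarrow> complex" where
  "sg y a = (if y ! a then 1 else -1)"

definition YY :: "nat \<Rightarrow> bool list set" where
  "YY k = {y. length y = k}"

lemma finite_YY: "finite (YY k)"
  unfolding YY_def using finite_lists_length_eq[of "UNIV :: bool set" k] by simp

lemma card_YY: "card (YY k) = 2 ^ k"
  unfolding YY_def using card_lists_length_eq[of "UNIV :: bool set" k] by simp

lemma cmod_prod_sg: "cmod (prod_list (map (sg y) w)) = 1"
  by (induction w) (auto simp: sg_def norm_mult)

lemma sign_sum_zero:
  assumes w: "set w \<subseteq> {..<k}" and odd: "\<not> (\<forall>b. even (count_list w b))"
  shows "(\<Sum>y\<in>YY k. prod_list (map (sg y) w)) = 0"
proof -
  obtain a where oa: "odd (count_list w a)" using odd by auto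
  hence "count_list w a \<noteq> 0" by presburger
  hence "a \<in> set w" by (simp add: count_list_0_iff)
  hence ak: "a < k" using w by auto
  define f where "f y = y[a := \<not> y ! a]" for y :: "bool list"
  have fY: "f y \<in> YY k" if "y \<in> YY k" for y using that unfolding f_def YY_def by simp
  have ff: "f (f y) = y" if "y \<in> YY k" for y
    using that ak unfolding f_def YY_def by (simp add: list_update_same_conv)
  have sgf: "sg (f y) b = (if b = a then - sg y b else sg y b)" if "y \<in> YY k" for y b
    using that ak unfolding f_def YY_def sg_def by (auto simp: nth_list_update)
  have pf: "prod_list (map (sg (f y)) v) = (-1) ^ count_list v a * prod_list (map (sg y) v)"
    if "y \<in> YY k" for y v
    by (induction v) (auto simp: sgf[OF that])
  have "(\<Sum>y\<in>YY k. prod_list (map (sg y) w)) = (\<Sum>y\<in>YY k. prod_list (map (sg (f y)) w))"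
    by (rule sum.reindex_bij_witness[of _ f f]) (auto simp: fY ff)
  also have "\<dots> = (\<Sum>y\<in>YY k. - prod_list (map (sg y) w))"
    using oa by (intro sum.cong refl) (simp add: pf)
  finally show ?thesis by (simp add: sum_negf)
qed

fun Pw :: "nat \<Rightarrow> (nat \<Rightarrow> complex mat) \<Rightarrow> nat list \<Rightarrow> complex mat" where
  "Pw d B [] = 1\<^sub>m d"
| "Pw d B (a # w) = Pw d B w * B a"

definition Smat :: "nat \<Rightarrow> nat \<Rightarrow> (nat \<Rightarrow> complex) \<Rightarrow> (nat \<Rightarrow> complex mat) \<Rightarrow> complex mat" where
  "Smat d k s B = mat d d (\<lambda>(i,j). \<Sum>a<k. s a * B a $$ (i,j))"

lemma Smat_carrier: "Smat d k s B \<in> carrier_mat d d"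
  unfolding Smat_def by simp

lemma Pw_carrier:
  assumes "\<And>a. a < k \<Longrightarrow> B a \<in> carrier_mat d d" "set w \<subseteq> {..<k}"
  shows "Pw d B w \<in> carrier_mat d d"
  using assms(2) by (induction w) (auto intro: mult_carrier_mat assms(1))

lemma expand:
  assumes B: "\<And>a. a < k \<Longrightarrow> B a \<in> carrier_mat d d" and i: "i < d" and j: "j < d"
  shows "(Smat d k s B ^\<^sub>m q) $$ (i,j) = (\<Sum>w\<in>WW k q. prod_list (map s w) * Pw d B w $$ (i,j))"
  using i j
proof (induction q arbitrary: i j)
  case 0
  have "WW k 0 = {[]}" unfolding WW_def by auto
  then show ?case using 0 Smat_carrier[of d k s B] by (simp add: carrier_matD)
next
  case (Suc q)
  let ?S = "Smat d k s B"
  have Sc: "?S \<in> carrier_mat d d" by (rule Smat_carrier)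
  have Sq: "?S ^\<^sub>m q \<in> carrier_mat d d" using Sc by simp
  have "(?S ^\<^sub>m Suc q) $$ (i,j) = (?S ^\<^sub>m q * ?S) $$ (i,j)" by simp
  also have "\<dots> = (\<Sum>l<d. (?S ^\<^sub>m q) $$ (i,l) * ?S $$ (l,j))" by (rule mult_entry[OF Sq Sc Suc.prems])
  also have "\<dots> = (\<Sum>l<d. (\<Sum>w\<in>WW k q. prod_list (map s w) * Pw d B w $$ (i,l)) * (\<Sum>a<k. s a * B a $$ (l,j)))"
    using Suc.IH[OF Suc.prems(1)] Suc.prems(2) by (intro sum.cong refl) (simp add: Smat_def)
  also have "\<dots> = (\<Sum>l<d. \<Sum>w\<in>WW k q. \<Sum>a<k. (prod_list (map s w) * Pw d B w $$ (i,l)) * (s a * B a $$ (l,j)))"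
    by (simp only: sum_product)
  also have "\<dots> = (\<Sum>l<d. \<Sum>w\<in>WW k q. \<Sum>a<k. (s a * prod_list (map s w)) * (Pw d B w $$ (i,l) * B a $$ (l,j)))"
    by (simp only: ac_simps)
  also have "\<dots> = (\<Sum>w\<in>WW k q. \<Sum>l<d. \<Sum>a<k. (s a * prod_list (map s w)) * (Pw d B w $$ (i,l) * B a $$ (l,j)))"
    by (rule sum.swap)
  also have "\<dots> = (\<Sum>w\<in>WW k q. \<Sum>a<k. \<Sum>l<d. (s a * prod_list (map s w)) * (Pw d B w $$ (i,l) * B a $$ (l,j)))"
    by (rule sum.cong[OF refl]) (rule sum.swap)
  also have "\<dots> = (\<Sum>w\<in>WW k q. \<Sum>a<k. prod_list (map s (a # w)) * Pw d B (a # w) $$ (i,j))"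
  proof (intro sum.cong refl)
    fix w a assume w: "w \<in> WW k q" and a: "a \<in> {..<k}"
    have Pc: "Pw d B w \<in> carrier_mat d d" using w B unfolding WW_def by (intro Pw_carrier[of k]) auto
    have Bc: "B a \<in> carrier_mat d d" using a B by auto
    show "(\<Sum>l<d. (s a * prod_list (map s w)) * (Pw d B w $$ (i,l) * B a $$ (l,j))) =
          prod_list (map s (a # w)) * Pw d B (a # w) $$ (i,j)"
      unfolding Pw.simps mult_entry[OF Pc Bc Suc.prems] by (simp add: sum_distrib_left)
  qed
  also have "\<dots> = (\<Sum>(w,a)\<in>WW k q \<times> {..<k}. prod_list (map s (a # w)) * Pw d B (a # w) $$ (i,j))"
    by (simp add: sum.cartesian_product)
  also have "\<dots> = (\<Sum>w\<in>WW k (Suc q). prod_list (map s w) * Pw d B w $$ (i,j))"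
  proof -
    have eq: "WW k (Suc q) = (\<lambda>(xs, n). n # xs) ` (WW k q \<times> {..<k})"
      unfolding WW_def by (rule lists_length_Suc_eq)
    have inj: "inj_on (\<lambda>(xs, n). n # xs) (WW k q \<times> {..<k})" by (auto simp: inj_on_def)
    show ?thesis unfolding eq sum.reindex[OF inj] by (simp add: case_prod_unfold)
  qed
  finally show ?case .
qed

lemma trace_expand:
  assumes B: "\<And>a. a < k \<Longrightarrow> B a \<in> carrier_mat d d"
  shows "mat_trace (Smat d k s B ^\<^sub>m q) = (\<Sum>w\<in>WW k q. prod_list (map s w) * mat_trace (Pw d B w))"
proof -
  have "mat_trace (Smat d k s B ^\<^sub>m q) = (\<Sum>i<d. (Smat d k s B ^\<^sub>m q) $$ (i,i))"
    unfolding mat_trace_def using Smat_carrier[of d k s B] by simp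
  also have "\<dots> = (\<Sum>i<d. \<Sum>w\<in>WW k q. prod_list (map s w) * Pw d B w $$ (i,i))"
    by (intro sum.cong refl) (simp add: expand[OF B])
  also have "\<dots> = (\<Sum>w\<in>WW k q. \<Sum>i<d. prod_list (map s w) * Pw d B w $$ (i,i))" by (rule sum.swap)
  also have "\<dots> = (\<Sum>w\<in>WW k q. prod_list (map s w) * mat_trace (Pw d B w))"
  proof (intro sum.cong refl)
    fix w assume w: "w \<in> WW k q"
    have Pc: "Pw d B w \<in> carrier_mat d d" using w B unfolding WW_def by (intro Pw_carrier[of k]) auto
    show "(\<Sum>i<d. prod_list (map s w) * Pw d B w $$ (i,i)) = prod_list (map s w) * mat_trace (Pw d B w)"
      unfolding mat_trace_def using Pc by (simp add: sum_distrib_left)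
  qed
  finally show ?thesis .
qed

lemma nv_uv: "i < d \<Longrightarrow> nv d (uv i) = 1"
  unfolding nv_def uv_def by (simp add: if_distrib[of "\<lambda>z. (cmod z)^2"] sum.delta cong: if_cong)

lemma Pw_nv:
  assumes B: "\<And>a. a < k \<Longrightarrow> B a \<in> carrier_mat d d"
    and OBa: "\<And>a x. a < k \<Longrightarrow> nv d (ap d (B a) x) \<le> M^2 * nv d x"
    and w: "set w \<subseteq> {..<k}"
  shows "nv d (ap d (Pw d B w) x) \<le> (M^2) ^ length w * nv d x"
  using w
proof (induction w arbitrary: x)
  case Nil
  have "nv d (ap d (1\<^sub>m d) x) = nv d x"
  proof (rule nv_cong)
    fix i assume i: "i < d"
    have "ap d (1\<^sub>m d) x i = (\<Sum>j<d. if j = i then x j else 0)"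
      unfolding ap_def using i by (intro sum.cong refl) auto
    also have "\<dots> = x i" using i by (simp add: sum.delta)
    finally show "ap d (1\<^sub>m d) x i = x i" .
  qed
  then show ?case by simp
next
  case (Cons a w)
  have Pc: "Pw d B w \<in> carrier_mat d d" using Cons.prems B by (intro Pw_carrier[of k]) auto
  have ak: "a < k" using Cons.prems by simp
  have "nv d (ap d (Pw d B (a # w)) x) = nv d (ap d (Pw d B w) (ap d (B a) x))"
    by (rule nv_cong) (simp add: ap_mult[OF Pc B[OF ak]])
  also have "\<dots> \<le> (M^2) ^ length w * nv d (ap d (B a) x)" using Cons by simp
  also have "\<dots> \<le> (M^2) ^ length w * (M^2 * nv d x)"
    by (intro mult_left_mono OBa[OF ak]) simp
  finally show ?case by (simp add: algebra_simps)
qed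

lemma Pw_trace:
  assumes B: "\<And>a. a < k \<Longrightarrow> B a \<in> carrier_mat d d"
    and OBa: "\<And>a x. a < k \<Longrightarrow> nv d (ap d (B a) x) \<le> M^2 * nv d x"
    and M: "0 \<le> M" and w: "set w \<subseteq> {..<k}"
  shows "cmod (mat_trace (Pw d B w)) \<le> d * M ^ length w"
proof -
  let ?P = "Pw d B w"
  have Pc: "?P \<in> carrier_mat d d" using w B by (intro Pw_carrier[of k]) auto
  have diag: "cmod (?P $$ (i,i)) \<le> M ^ length w" if i: "i < d" for i
  proof -
    have apu: "ap d ?P (uv i) a = ?P $$ (a,i)" for a
      unfolding ap_def uv_def using i by (simp add: if_distrib cong: if_cong)
    have "(cmod (?P $$ (i,i)))^2 \<le> nv d (ap d ?P (uv i))"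
      unfolding nv_def apu using i by (intro member_le_sum[where f = "\<lambda>a. (cmod (?P $$ (a,i)))^2"]) auto
    also have "\<dots> \<le> (M^2) ^ length w * nv d (uv i)" by (rule Pw_nv[OF B OBa w])
    also have "\<dots> = (M ^ length w)^2" using i by (simp add: nv_uv power_mult[symmetric] mult.commute)
    finally show ?thesis by (rule power2_le_imp_le) (simp add: M)
  qed
  have "cmod (mat_trace ?P) \<le> (\<Sum>i<d. cmod (?P $$ (i,i)))"
    unfolding mat_trace_def using Pc by (simp add: norm_sum)
  also have "\<dots> \<le> (\<Sum>i<d. M ^ length w)" using diag by (intro sum_mono) auto
  finally show ?thesis by simp
qed

lemma UB:
  assumes B: "\<And>a. a < k \<Longrightarrow> B a \<in> carrier_mat d d"
    and OBa: "\<And>a x. a < k \<Longrightarrow> nv d (ap d (B a) x) \<le> M^2 * nv d x"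
    and M: "0 \<le> M"
  shows "(\<Sum>y\<in>YY k. Re (mat_trace (Smat d k (sg y) B ^\<^sub>m q))) \<le> 2 ^ k * (real d * M ^ q) * real (card (EW k q))"
proof -
  let ?C = "2 ^ k * (real d * M ^ q) :: real"
  have "(\<Sum>y\<in>YY k. Re (mat_trace (Smat d k (sg y) B ^\<^sub>m q)))
      = (\<Sum>y\<in>YY k. \<Sum>w\<in>WW k q. Re (prod_list (map (sg y) w) * mat_trace (Pw d B w)))"
    by (simp add: trace_expand[OF B] Re_sum)
  also have "\<dots> = (\<Sum>w\<in>WW k q. \<Sum>y\<in>YY k. Re (prod_list (map (sg y) w) * mat_trace (Pw d B w)))"
    by (rule sum.swap)
  also have "\<dots> = (\<Sum>w\<in>WW k q. Re ((\<Sum>y\<in>YY k. prod_list (map (sg y) w)) * mat_trace (Pw d B w)))"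
    by (simp add: Re_sum sum_distrib_right)
  also have "\<dots> \<le> (\<Sum>w\<in>WW k q. if w \<in> EW k q then ?C else 0)"
  proof (intro sum_mono)
    fix w assume w: "w \<in> WW k q"
    have sw: "set w \<subseteq> {..<k}" and lw: "length w = q" using w unfolding WW_def by auto
    show "Re ((\<Sum>y\<in>YY k. prod_list (map (sg y) w)) * mat_trace (Pw d B w)) \<le> (if w \<in> EW k q then ?C else 0)"
    proof (cases "w \<in> EW k q")
      case False
      hence "\<not> (\<forall>b. even (count_list w b))" using sw lw unfolding EW_def by auto
      then show ?thesis using False sign_sum_zero[OF sw] by simp
    next
      case True
      have c1: "cmod (\<Sum>y\<in>YY k. prod_list (map (sg y) w)) \<le> 2 ^ k"
      proof -
        have "cmod (\<Sum>y\<in>YY k. prod_list (map (sg y) w)) \<le> (\<Sum>y\<in>YY k. cmod (prod_list (map (sg y) w)))"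
          by (rule norm_sum)
        also have "\<dots> = 2 ^ k" by (simp add: cmod_prod_sg card_YY)
        finally show ?thesis .
      qed
      have c2: "cmod (mat_trace (Pw d B w)) \<le> d * M ^ q" using Pw_trace[OF B OBa M sw] lw by simp
      have "Re ((\<Sum>y\<in>YY k. prod_list (map (sg y) w)) * mat_trace (Pw d B w))
          \<le> cmod ((\<Sum>y\<in>YY k. prod_list (map (sg y) w)) * mat_trace (Pw d B w))" by (rule complex_Re_le_cmod)
      also have "\<dots> = cmod (\<Sum>y\<in>YY k. prod_list (map (sg y) w)) * cmod (mat_trace (Pw d B w))"
        by (rule norm_mult)
      also have "\<dots> \<le> 2 ^ k * (d * M ^ q)" by (intro mult_mono c1 c2) auto
      finally show ?thesis using True by simp
    qed
  qed
  also have "\<dots> = ?C * card (EW k q)"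
  proof -
    have "(\<Sum>w\<in>WW k q. if w \<in> EW k q then ?C else 0) = (\<Sum>w\<in>EW k q. ?C)"
      using EW_sub[of k q] finite_WW[of k q] by (simp add: sum.If_cases Int_absorb1)
    thus ?thesis by simp
  qed
  finally show ?thesis .
qed



lemma final_arith:
  fixes k g M dd :: real and p n :: nat
  assumes k: "0 < k" and M: "0 \<le> M" and p: "0 < p" and pn: "p \<le> n"
    and dd: "dd \<le> 4 ^ p"
    and main: "(k * g) ^ (2 * p) \<le> dd * M ^ (2 * p) * k ^ p * (2 * real p) ^ p"
  shows "k * g^2 \<le> 8 * real n * M^2"
proof -
  define z where "z = M^2"
  define t where "t = 2 * real p"
  have z: "0 \<le> z" unfolding z_def by simp
  have t: "0 \<le> t" unfolding t_def by simp
  have l: "(k * g) ^ (2 * p) = k ^ p * (k * g^2) ^ p"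
    by (simp add: power_mult power_mult_distrib power2_eq_square algebra_simps)
  have Mz: "M ^ (2 * p) = z ^ p" unfolding z_def by (simp add: power_mult)
  have "dd * M ^ (2 * p) * k ^ p * (2 * real p) ^ p = dd * z ^ p * k ^ p * t ^ p"
    unfolding Mz t_def by simp
  also have "\<dots> \<le> 4 ^ p * z ^ p * k ^ p * t ^ p"
    using dd k z t by (intro mult_right_mono) auto
  also have "\<dots> = k ^ p * (4 * t * z) ^ p"
    by (simp add: power_mult_distrib mult_ac)
  finally have "k ^ p * (k * g^2) ^ p \<le> k ^ p * (4 * t * z) ^ p" using main l by simp
  hence "(k * g^2) ^ p \<le> (4 * t * z) ^ p" using k by simp
  moreover obtain p' where p': "p = Suc p'" using p by (cases p) auto
  ultimately have "(k * g^2) ^ Suc p' \<le> (4 * t * z) ^ Suc p'" by simp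
  hence "k * g^2 \<le> 4 * t * z" by (rule power_le_imp_le_base) (use z t in auto)
  also have "\<dots> = 8 * real p * M^2" unfolding t_def z_def by simp
  also have "\<dots> \<le> 8 * real n * M^2" using pn M by (intro mult_right_mono) auto
  finally show ?thesis .
qed

lemma cnj_sg: "cnj (sg y a) = sg y a"
  by (simp add: sg_def)

lemma herm_S:
  assumes "\<And>a. a < k \<Longrightarrow> hermitian_mat d (B a)"
  shows "hermitian_mat d (Smat d k (sg y) B)"
  unfolding hermitian_mat_def
proof (intro conjI allI impI)
  show "Smat d k (sg y) B \<in> carrier_mat d d" by (rule Smat_carrier)
  fix i j assume ij: "i < d" "j < d"
  have "cnj (Smat d k (sg y) B $$ (j,i)) = (\<Sum>a<k. sg y a * cnj (B a $$ (j,i)))"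
    using ij by (simp add: Smat_def cnj_sum cnj_sg)
  also have "\<dots> = (\<Sum>a<k. sg y a * B a $$ (i,j))"
    using ij by (intro sum.cong refl) (simp add: herm_cnj[OF assms])
  finally show "Smat d k (sg y) B $$ (i,j) = cnj (Smat d k (sg y) B $$ (j,i))"
    using ij by (simp add: Smat_def)
qed

lemma trace_lin:
  assumes R: "R \<in> carrier_mat d d" and B: "\<And>a. a < k \<Longrightarrow> B a \<in> carrier_mat d d"
  shows "mat_trace (R * Smat d k s B) = (\<Sum>a<k. s a * mat_trace (R * B a))"
proof -
  have "mat_trace (R * Smat d k s B) = (\<Sum>i<d. \<Sum>l<d. R $$ (i,l) * Smat d k s B $$ (l,i))"
    by (rule trace_mult[OF R Smat_carrier])
  also have "\<dots> = (\<Sum>i<d. \<Sum>l<d. \<Sum>a<k. s a * (R $$ (i,l) * B a $$ (l,i)))"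
    by (intro sum.cong refl) (simp add: Smat_def sum_distrib_left algebra_simps)
  also have "\<dots> = (\<Sum>i<d. \<Sum>a<k. \<Sum>l<d. s a * (R $$ (i,l) * B a $$ (l,i)))"
    by (rule sum.cong[OF refl]) (rule sum.swap)
  also have "\<dots> = (\<Sum>a<k. \<Sum>i<d. \<Sum>l<d. s a * (R $$ (i,l) * B a $$ (l,i)))"
    by (rule sum.swap)
  also have "\<dots> = (\<Sum>a<k. s a * mat_trace (R * B a))"
    by (intro sum.cong refl) (simp add: trace_mult[OF R B] sum_distrib_left)
  finally show ?thesis .
qed



theorem mainTheorem1:
  "\<exists>c::real. c > 0 \<and>
    (\<forall>(k::nat) (n::nat) (\<rho>::bool list \<Rightarrow> complex mat) (Obs::nat \<Rightarrow> complex mat)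
       (\<alpha>::nat \<Rightarrow> real) (\<gamma>::real).
       0 < n \<longrightarrow> n < k \<longrightarrow>
       (\<forall>y. length y = k \<longrightarrow> density_mat n (\<rho> y)) \<longrightarrow>
       (\<forall>i<k. hermitian_mat (2 ^ n) (Obs i)) \<longrightarrow>
       \<gamma> > 0 \<longrightarrow>
       (\<forall>y i. length y = k \<longrightarrow> i < k \<longrightarrow>
          (\<not> y ! i \<longrightarrow> Re (mat_trace (\<rho> y * Obs i)) \<le> \<alpha> i - \<gamma>) \<and>
          (y ! i \<longrightarrow> Re (mat_trace (\<rho> y * Obs i)) \<ge> \<alpha> i + \<gamma>)) \<longrightarrow>
       real n * (Max {spec_norm (Obs i) | i. i < k}) ^ 2 / \<gamma> ^ 2 \<ge> c * real k)"
proof (intro exI[of _ "1/8 :: real"] conjI allI impI)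
  show "(0::real) < 1/8" by simp
next
  fix k n :: nat and \<rho> :: "bool list \<Rightarrow> complex mat" and Obs :: "nat \<Rightarrow> complex mat"
    and \<alpha> :: "nat \<Rightarrow> real" and \<gamma> :: real
  assume n0: "0 < n" and nk: "n < k" and dens: "\<forall>y. length y = k \<longrightarrow> density_mat n (\<rho> y)"
    and herm: "\<forall>i<k. hermitian_mat (2 ^ n) (Obs i)" and g: "\<gamma> > 0"
    and sep: "\<forall>y i. length y = k \<longrightarrow> i < k \<longrightarrow>
          (\<not> y ! i \<longrightarrow> Re (mat_trace (\<rho> y * Obs i)) \<le> \<alpha> i - \<gamma>) \<and>
          (y ! i \<longrightarrow> Re (mat_trace (\<rho> y * Obs i)) \<ge> \<alpha> i + \<gamma>)"
  define d where "d = (2::nat) ^ n"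
  have d0: "0 < d" unfolding d_def by simp
  have k0: "0 < k" using nk by simp
  define M where "M = Max {spec_norm (Obs i) | i. i < k}"
  have setEq: "{spec_norm (Obs i) | i. i < k} = (\<lambda>i. spec_norm (Obs i)) ` {..<k}" by auto
  have Oh: "hermitian_mat d (Obs a)" if "a < k" for a using herm that unfolding d_def by simp
  have Oc: "Obs a \<in> carrier_mat d d" if "a < k" for a by (rule herm_carrier[OF Oh[OF that]])
  have Mge: "spec_norm (Obs a) \<le> M" if "a < k" for a
    unfolding M_def setEq using that by (intro Max_ge) auto
  have M0: "0 \<le> M" using spec_norm_nonneg[OF Oc[OF k0] d0] Mge[OF k0] by simp
  have ev: "cmod e \<le> M" if "a < k" "eigenvalue (Obs a) e" for a e
    using spec_norm_ge[OF Oc[OF that(1)] that(2)] Mge[OF that(1)] by simp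
  have OBa: "nv d (ap d (Obs a) x) \<le> M^2 * nv d x" if "a < k" for a x
    by (rule OB[OF Oh[OF that] d0 M0 ev[OF that]])
  obtain j where j: "2 ^ j \<le> n" "n < 2 ^ (j + 1)" using ex_power_ivl1[of 2 n] n0 by auto
  define p where "p = (2::nat) ^ j"
  have p0: "0 < p" unfolding p_def by simp
  have q: "(2::nat) ^ Suc j = 2 * p" unfolding p_def by simp
  have R: "psd_mat d (\<rho> y) \<and> mat_trace (\<rho> y) = 1" if "length y = k" for y
    using dens that unfolding density_mat_def d_def by auto
  have LBy: "(real k * \<gamma>) ^ (2 ^ Suc j) \<le> Re (mat_trace (Smat d k (sg y) Obs ^\<^sub>m (2 ^ Suc j)))"
    if y: "y \<in> YY k" for y
  proof -
    have ly: "length y = k" using y unfolding YY_def by simp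
    define z where "z = map Not y"
    have lz: "length z = k" unfolding z_def using ly by simp
    let ?S = "Smat d k (sg y) Obs"
    have Sh: "hermitian_mat d ?S" by (rule herm_S) (rule Oh)
    have Ry: "psd_mat d (\<rho> y)" "mat_trace (\<rho> y) = 1" using R[OF ly] by auto
    have Rz: "psd_mat d (\<rho> z)" "mat_trace (\<rho> z) = 1" using R[OF lz] by auto
    have tly: "mat_trace (\<rho> y * ?S) = (\<Sum>a<k. sg y a * mat_trace (\<rho> y * Obs a))"
      by (rule trace_lin[OF psd_carrier[OF Ry(1)] Oc])
    have tlz: "mat_trace (\<rho> z * ?S) = (\<Sum>a<k. sg y a * mat_trace (\<rho> z * Obs a))"
      by (rule trace_lin[OF psd_carrier[OF Rz(1)] Oc])
    have tm: "2 * \<gamma> \<le> Re (sg y a * mat_trace (\<rho> y * Obs a)) - Re (sg y a * mat_trace (\<rho> z * Obs a))"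
      if a: "a < k" for a
    proof -
      have za: "z ! a = (\<not> y ! a)" unfolding z_def using a ly by simp
      have s1: "(\<not> y ! a \<longrightarrow> Re (mat_trace (\<rho> y * Obs a)) \<le> \<alpha> a - \<gamma>) \<and>
          (y ! a \<longrightarrow> Re (mat_trace (\<rho> y * Obs a)) \<ge> \<alpha> a + \<gamma>)" using sep ly a by blast
      have s2: "(\<not> z ! a \<longrightarrow> Re (mat_trace (\<rho> z * Obs a)) \<le> \<alpha> a - \<gamma>) \<and>
          (z ! a \<longrightarrow> Re (mat_trace (\<rho> z * Obs a)) \<ge> \<alpha> a + \<gamma>)" using sep lz a by blast
      show ?thesis using s1 s2 za by (cases "y ! a") (auto simp: sg_def)
    qed
    have "real k * (2 * \<gamma>) = (\<Sum>a<k. 2 * \<gamma>)" by simp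
    also have "\<dots> \<le> (\<Sum>a<k. Re (sg y a * mat_trace (\<rho> y * Obs a)) - Re (sg y a * mat_trace (\<rho> z * Obs a)))"
      using tm by (intro sum_mono) auto
    also have "\<dots> = Re (mat_trace (\<rho> y * ?S)) - Re (mat_trace (\<rho> z * ?S))"
      unfolding tly tlz by (simp add: Re_sum sum_subtractf)
    finally have key: "2 * (real k * \<gamma>) \<le> Re (mat_trace (\<rho> y * ?S)) - Re (mat_trace (\<rho> z * ?S))" by simp
    have c1: "Re (mat_trace (\<rho> y * ?S)) \<le> cmod (mat_trace (\<rho> y * ?S))" by (rule complex_Re_le_cmod)
    have c2: "- Re (mat_trace (\<rho> z * ?S)) \<le> cmod (mat_trace (\<rho> z * ?S))"
      using abs_Re_le_cmod[of "mat_trace (\<rho> z * ?S)"] by linarith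
    have t0: "0 \<le> real k * \<gamma>" using g by simp
    show ?thesis
    proof (cases "real k * \<gamma> \<le> cmod (mat_trace (\<rho> y * ?S))")
      case True
      show ?thesis by (rule LB[OF Ry Sh t0 True])
    next
      case False
      hence "real k * \<gamma> \<le> cmod (mat_trace (\<rho> z * ?S))" using key c1 c2 by linarith
      thus ?thesis by (rule LB[OF Rz Sh t0])
    qed
  qed
  have LB2: "(real k * \<gamma>) ^ (2 * p) \<le> Re (mat_trace (Smat d k (sg y) Obs ^\<^sub>m (2 * p)))"
    if "y \<in> YY k" for y using LBy[OF that] unfolding q .
  have s1: "real (2 ^ k) * (real k * \<gamma>) ^ (2 * p) = (\<Sum>y\<in>YY k. (real k * \<gamma>) ^ (2 * p))"
    by (simp add: card_YY)
  have s2: "(\<Sum>y\<in>YY k. (real k * \<gamma>) ^ (2 * p)) \<le> (\<Sum>y\<in>YY k. Re (mat_trace (Smat d k (sg y) Obs ^\<^sub>m (2 * p))))"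
    using LB2 by (intro sum_mono) auto
  have s3: "(\<Sum>y\<in>YY k. Re (mat_trace (Smat d k (sg y) Obs ^\<^sub>m (2 * p))))
       \<le> 2 ^ k * (real d * M ^ (2 * p)) * real (card (EW k (2 * p)))"
    by (rule UB[OF Oc OBa M0])
  have ce: "real (card (EW k (2*p))) \<le> real (k ^ p * (2 * p) ^ p)"
    using card_EW[of k p] by (simp only: of_nat_le_iff)
  also have "real (k ^ p * (2 * p) ^ p) = real k ^ p * (2 * real p) ^ p" by simp
  finally have ce2: "real (card (EW k (2*p))) \<le> real k ^ p * (2 * real p) ^ p" .
  have nn: "0 \<le> (2::real) ^ k * (real d * M ^ (2 * p))" using M0 by simp
  have "real (2 ^ k) * (real k * \<gamma>) ^ (2 * p) \<le> 2 ^ k * (real d * M ^ (2 * p)) * (real k ^ p * (2 * real p) ^ p)"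
    using s1 s2 s3 mult_left_mono[OF ce2 nn] by linarith
  hence "(2::real) ^ k * (real k * \<gamma>) ^ (2 * p) \<le> 2 ^ k * (real d * M ^ (2 * p) * real k ^ p * (2 * real p) ^ p)"
    by (simp only: of_nat_power of_nat_numeral mult.assoc)
  hence main: "(real k * \<gamma>) ^ (2 * p) \<le> real d * M ^ (2 * p) * real k ^ p * (2 * real p) ^ p"
    by (simp only: mult_le_cancel_left_pos[OF zero_less_power[of "2::real" k]] )
  have pn: "p \<le> n" using j unfolding p_def by simp
  have "n \<le> 2 * p" using j unfolding p_def by simp
  hence "(2::real) ^ n \<le> 2 ^ (2 * p)" by (intro power_increasing) auto
  also have "\<dots> = 4 ^ p" by (simp add: power_mult)
  finally have dd: "real d \<le> 4 ^ p" unfolding d_def by simp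
  have fin: "real k * \<gamma>^2 \<le> 8 * real n * M^2"
    by (rule final_arith[OF _ M0 p0 pn dd main]) (use k0 in simp)
  have g2: "0 < \<gamma>^2" using g by simp
  have "1/8 * real k * \<gamma>^2 \<le> real n * M^2" using fin by simp
  hence "1/8 * real k \<le> real n * M^2 / \<gamma>^2" by (simp only: pos_le_divide_eq[OF g2])
  thus "real n * (Max {spec_norm (Obs i) | i. i < k}) ^ 2 / \<gamma> ^ 2 \<ge> 1/8 * real k"
    unfolding M_def by simp
qed


end
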